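(* Let $k\ge 2$, $D'=\{0,1,\dots,k\}$ and $D=\{1,\dots,k\}$. The class of $k$-submodular functions on $D'$ is persistent with respect to the integral domain $D$: for every $k$-submodular $f:(D')^n\to\mathbb{R}$ and every minimiser $X^*$ of $f$ over $(D')^n$, there is a minimiser $X$ of $f$ over $D^n$ such that $X_i=X^*_i$ for every coordinate $i$ with $X^*_i\ne 0$. Furthermore, the class contains all hard constants from $D$: for each $d\in D$ there is a unary $k$-submodular function $f_d$ on $D'$ which has $v=d$ as its unique minimum.
   Context: Define symmetric idempotent operations $\sqcap,\sqcup$ on $D'=\{0,\dots,k\}$ by $0\sqcap x=0$, $0\sqcup x=x$, $x\sqcap x=x\sqcup x=x$, and $x\sqcap y=x\sqcup y=0$ for distinct $x,y\in D'\setminus\{0\}$. A function $f:(D')^r\to\mathbb{R}$ is $k$-submodular if $f(X)+f(Y)\ge f(X\sqcap Y)+f(X\sqcup Y)$ for all $X,Y\in(D')^r$, the operations applied coordinatewise. *)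

theory Defs
  imports Complex_Main
begin

definition kmeet :: "nat \<Rightarrow> nat \<Rightarrow> nat" where
  "kmeet x y = (if x = y then x else 0)"

definition kjoin :: "nat \<Rightarrow> nat \<Rightarrow> nat" where
  "kjoin x y = (if x = 0 then y else if y = 0 then x else if x = y then x else 0)"

definition tuples :: "nat set \<Rightarrow> nat \<Rightarrow> nat list set" where
  "tuples A n = {X. length X = n \<and> set X \<subseteq> A}"

definition k_submodular :: "nat \<Rightarrow> nat \<Rightarrow> (nat list \<Rightarrow> real) \<Rightarrow> bool" where
  "k_submodular k n f \<longleftrightarrow>
     (\<forall>X \<in> tuples {0..k} n. \<forall>Y \<in> tuples {0..k} n.
        f X + f Y \<ge> f (map2 kmeet X Y) + f (map2 kjoin X Y))"

definition is_minimiser :: "(nat list \<Rightarrow> real) \<Rightarrow> nat list set \<Rightarrow> nat list \<Rightarrow> bool" where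
  "is_minimiser f S X \<longleftrightarrow> X \<in> S \<and> (\<forall>Y \<in> S. f X \<le> f Y)"

end

theory Submission
  imports Defs
begin

lemma tup_map2:
  assumes "X \<in> tuples {0..k} n" "Y \<in> tuples {0..k} n"
    and "\<And>a b. a \<le> k \<Longrightarrow> b \<le> k \<Longrightarrow> h a b \<le> k"
  shows "map2 h X Y \<in> tuples {0..k} n"
  using assms unfolding tuples_def
  by (auto simp: set_zip subset_iff)

lemma kmeet_le: "a \<le> k \<Longrightarrow> b \<le> k \<Longrightarrow> kmeet a b \<le> k"
  by (simp add: kmeet_def)
lemma kjoin_le: "a \<le> k \<Longrightarrow> b \<le> k \<Longrightarrow> kjoin a b \<le> k"
  by (simp add: kjoin_def)

lemma part1:
  assumes ks: "k_submodular k n f" and mn: "is_minimiser f (tuples {0..k} n) Xs" and k1: "k \<ge> 1"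
  shows "\<exists>X. is_minimiser f (tuples {1..k} n) X \<and> (\<forall>i<n. Xs ! i \<noteq> 0 \<longrightarrow> X ! i = Xs ! i)"
proof -
  let ?S = "tuples {1..k} n"
  have fin: "finite ?S"
  proof -
    have "?S = {xs. set xs \<subseteq> {1..k} \<and> length xs = n}" by (auto simp: tuples_def)
    thus ?thesis using finite_lists_length_eq[of "{1..k}" n] by simp
  qed
  have ne: "replicate n 1 \<in> ?S" using k1 by (auto simp: tuples_def)
  obtain X where X: "X \<in> ?S" "\<forall>Y\<in>?S. f X \<le> f Y"
  proof -
    have ne2: "?S \<noteq> {}" using ne by blast
    have "arg_min_on f ?S \<in> ?S" "\<forall>y\<in>?S. f (arg_min_on f ?S) \<le> f y"
      using arg_min_if_finite[OF fin ne2, of f] by (auto simp: not_less)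
    thus ?thesis using that by blast
  qed
  have XsT: "Xs \<in> tuples {0..k} n" and Xsmin: "\<forall>Y\<in>tuples {0..k} n. f Xs \<le> f Y"
    using mn by (auto simp: is_minimiser_def)
  have XT: "X \<in> tuples {0..k} n" using X(1) by (auto simp: tuples_def)
  have lX: "length X = n" and lXs: "length Xs = n" and sX: "set X \<subseteq> {1..k}" and sXs: "set Xs \<subseteq> {0..k}"
    using X(1) XsT by (auto simp: tuples_def)
  define M where "M = map2 kjoin Xs X"
  have MT: "M \<in> tuples {0..k} n" unfolding M_def using tup_map2[OF XsT XT] kjoin_le by blast
  have MeT: "map2 kmeet Xs X \<in> tuples {0..k} n" using tup_map2[OF XsT XT] kmeet_le by blast
  have MeT2: "map2 kmeet Xs M \<in> tuples {0..k} n" using tup_map2[OF XsT MT] kmeet_le by blast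
  have s1: "f Xs + f X \<ge> f (map2 kmeet Xs X) + f M"
    using ks XsT XT unfolding k_submodular_def M_def by blast
  have "f Xs \<le> f (map2 kmeet Xs X)" using Xsmin MeT by blast
  hence fM: "f M \<le> f X" using s1 by linarith
  define W where "W = map2 kjoin Xs M"
  have s2: "f Xs + f M \<ge> f (map2 kmeet Xs M) + f W"
    using ks XsT MT unfolding k_submodular_def W_def by blast
  have "f Xs \<le> f (map2 kmeet Xs M)" using Xsmin MeT2 by blast
  hence fW: "f W \<le> f X" using s2 fM by linarith
  have lW: "length W = n" by (simp add: W_def M_def lX lXs)
  have Wi: "W ! i = (if Xs ! i = 0 then X ! i else Xs ! i)" if "i < n" for i
  proof -
    have "X ! i \<in> set X" "Xs ! i \<in> set Xs" using that lX lXs by auto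
    hence "X ! i \<noteq> 0" using sX by auto
    thus ?thesis using that lX lXs by (auto simp: W_def M_def kjoin_def)
  qed
  have WS: "W \<in> ?S"
  proof -
    have "W ! i \<in> {1..k}" if "i < n" for i
    proof -
      have "X ! i \<in> set X" "Xs ! i \<in> set Xs" using that lX lXs by auto
      thus ?thesis using Wi[OF that] sX sXs by auto
    qed
    thus ?thesis using lW by (auto simp: tuples_def in_set_conv_nth)
  qed
  show ?thesis
    apply (rule exI[of _ W])
    using WS fW X(2) Wi by (auto simp: is_minimiser_def)
qed

lemma part2:
  assumes d: "d \<in> {1..k}"
  shows "\<exists>g :: nat \<Rightarrow> real. k_submodular k 1 (\<lambda>X. g (hd X)) \<and>
            (\<forall>v \<in> {0..k}. v \<noteq> d \<longrightarrow> g d < g v)"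
proof -
  define g :: "nat \<Rightarrow> real" where "g v = (if v = d then 0 else if v = 0 then 1 else 2)" for v
  have "k_submodular k 1 (\<lambda>X. g (hd X))"
    unfolding k_submodular_def
  proof (intro ballI)
    fix X Y assume "X \<in> tuples {0..k} 1" "Y \<in> tuples {0..k} 1"
    then obtain x y where "X = [x]" "Y = [y]"
      by (auto simp: tuples_def length_Suc_conv)
    thus "g (hd (map2 kmeet X Y)) + g (hd (map2 kjoin X Y)) \<le> g (hd X) + g (hd Y)"
      using d by (auto simp: g_def kmeet_def kjoin_def)
  qed
  moreover have "\<forall>v \<in> {0..k}. v \<noteq> d \<longrightarrow> g d < g v" by (auto simp: g_def)
  ultimately show ?thesis by blast
qed

theorem lemma2:
  fixes k :: nat
  assumes "k \<ge> 2"
  shows "(\<forall>n f Xs. k_submodular k n f \<and> is_minimiser f (tuples {0..k} n) Xs \<longrightarrow>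
            (\<exists>X. is_minimiser f (tuples {1..k} n) X \<and>
                 (\<forall>i<n. Xs ! i \<noteq> 0 \<longrightarrow> X ! i = Xs ! i)))
       \<and> (\<forall>d \<in> {1..k}. \<exists>g :: nat \<Rightarrow> real.
            k_submodular k 1 (\<lambda>X. g (hd X)) \<and>
            (\<forall>v \<in> {0..k}. v \<noteq> d \<longrightarrow> g d < g v))"
proof -
  have k1: "k \<ge> 1" using assms by simp
  show ?thesis using part1[OF _ _ k1] part2 by blast
qed

end
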